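(* For each regular cardinal $\kappa$, a complete bounded distributive lattice $A$ is $\kappa$-proHeyting if and only if it is a $\kappa$-frame; that is, $\mathbf{C}\kappa\mathbf{proH}=\mathbf{C}\kappa\mathbf{Frm}$.
   Context: For a meet-semilattice $A$: $\mathcal{DM} A$ is the complete lattice of normal ideals; an existing join $\bigvee S$ is distributive if $a\wedge\bigvee S=\bigvee\{a\wedge s:s\in S\}$ for all $a$; $\mathcal{BL} A$ is the frame of D-ideals (downsets containing $\bigvee S$ for every subset $S$ of them with distributive join), and $\mathcal{DM} A\subseteq\mathcal{BL} A$. $\mathcal{BL}_\kappa(\mathcal{DM} A)$ is the sub-$\kappa$-frame of $\mathcal{BL} A$ generated by $\mathcal{DM} A$ (closure under finite meets and joins of fewer than $\kappa$ elements in $\mathcal{BL} A$). $A$ is $\kappa$-proHeyting if $\mathcal{BL}_\kappa(\mathcal{DM} A)=\mathcal{DM} A$; $A$ is a $\kappa$-frame if all joins of fewer than $\kappa$ elements exist and are distributive. $\mathbf{C}\kappa\mathbf{proH}$ and $\mathbf{C}\kappa\mathbf{Frm}$ denote the classes of complete bounded distributive lattices that are $\kappa$-proHeyting, respectively $\kappa$-frames. *)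

theory Defs
  imports Main
begin

definition ubs :: "'a::complete_lattice set \<Rightarrow> 'a set" where
  "ubs S = {x. \<forall>s\<in>S. s \<le> x}"

definition lbs :: "'a::complete_lattice set \<Rightarrow> 'a set" where
  "lbs S = {x. \<forall>s\<in>S. x \<le> s}"

(* DM A: the normal ideals (Dedekind-MacNeille completion) *)
definition DM :: "'a::complete_lattice set set" where
  "DM = {I. lbs (ubs I) = I}"

definition is_downset :: "'a::complete_lattice set \<Rightarrow> bool" where
  "is_downset I \<longleftrightarrow> (\<forall>x y. y \<in> I \<longrightarrow> x \<le> y \<longrightarrow> x \<in> I)"

definition distributive_join :: "'a::complete_lattice set \<Rightarrow> bool" where
  "distributive_join S \<longleftrightarrow> (\<forall>a. inf a (Sup S) = Sup {inf a s | s. s \<in> S})"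

definition D_ideal :: "'a::complete_lattice set \<Rightarrow> bool" where
  "D_ideal I \<longleftrightarrow> is_downset I \<and>
     (\<forall>S. S \<subseteq> I \<longrightarrow> distributive_join S \<longrightarrow> Sup S \<in> I)"

(* BL A: the frame of D-ideals, ordered by inclusion *)
definition BL :: "'a::complete_lattice set set" where
  "BL = {I. D_ideal I}"

definition BL_join :: "'a::complete_lattice set set \<Rightarrow> 'a set" where
  "BL_join F = \<Inter>{J \<in> BL. \<Union>F \<subseteq> J}"

(* A family X of D-ideals closed under finite meets and joins (in BL A) of
   fewer than kappa elements; kappa is a cardinal given as a well-order r *)
definition kappa_closed :: "'k rel \<Rightarrow> 'a::complete_lattice set set \<Rightarrow> bool" where
  "kappa_closed r X \<longleftrightarrow> X \<subseteq> BL \<and> UNIV \<in> X \<and>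
     (\<forall>I\<in>X. \<forall>J\<in>X. I \<inter> J \<in> X) \<and>
     (\<forall>F. F \<subseteq> X \<longrightarrow> ordLess2 (card_of F) r \<longrightarrow> BL_join F \<in> X)"

definition BL_kappa_DM :: "'k rel \<Rightarrow> 'a::complete_lattice set set" where
  "BL_kappa_DM r = \<Inter>{X. DM \<subseteq> X \<and> kappa_closed r X}"

definition kappa_proHeyting :: "'k rel \<Rightarrow> 'a::complete_lattice itself \<Rightarrow> bool" where
  "kappa_proHeyting r _ \<longleftrightarrow> (BL_kappa_DM r :: 'a set set) = DM"

definition kappa_frame :: "'k rel \<Rightarrow> 'a::complete_lattice itself \<Rightarrow> bool" where
  "kappa_frame r _ \<longleftrightarrow> (\<forall>S :: 'a set. ordLess2 (card_of S) r \<longrightarrow> distributive_join S)"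

end

theory Submission
  imports Defs
begin

lemma DM_char: "(I::'a::complete_lattice set) \<in> DM \<longleftrightarrow> (\<exists>a. I = {x. x \<le> a})"
proof
  assume "I \<in> DM"
  hence e: "lbs (ubs I) = I" by (simp add: DM_def)
  have "ubs I = {x. Sup I \<le> x}"
  proof (intro set_eqI iffI)
    fix x assume "x \<in> ubs I"
    thus "x \<in> {x. Sup I \<le> x}" by (simp add: ubs_def Sup_least)
  next
    fix x assume "x \<in> {x. Sup I \<le> x}"
    hence "Sup I \<le> x" by simp
    thus "x \<in> ubs I" unfolding ubs_def using Sup_upper order.trans by blast
  qed
  hence "lbs (ubs I) = {x. x \<le> Sup I}" by (auto simp: lbs_def)
  thus "\<exists>a. I = {x. x \<le> a}" using e by auto
next
  assume "\<exists>a. I = {x. x \<le> a}"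
  then obtain a where I: "I = {x. x \<le> a}" by auto
  have "ubs I = {x. a \<le> x}" unfolding I ubs_def
  proof (intro set_eqI iffI)
    fix x assume "x \<in> {x. \<forall>s\<in>{x. x \<le> a}. s \<le> x}"
    thus "x \<in> {x. a \<le> x}" by simp
  next
    fix x assume "x \<in> {x. a \<le> x}"
    hence "a \<le> x" by simp
    thus "x \<in> {x. \<forall>s\<in>{x. x \<le> a}. s \<le> x}" using order.trans by blast
  qed
  hence "lbs (ubs I) = I" unfolding I lbs_def by auto
  thus "I \<in> DM" by (simp add: DM_def)
qed

lemma down_BL: "{x. x \<le> (a::'a::complete_lattice)} \<in> BL"
proof -
  have "is_downset {x. x \<le> a}" unfolding is_downset_def
  proof (intro allI impI)
    fix x y assume "y \<in> {x. x \<le> a}" "x \<le> y"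
    thus "x \<in> {x. x \<le> a}" using order.trans[of x y a] by simp
  qed
  moreover have "Sup S \<in> {x. x \<le> a}" if "S \<subseteq> {x. x \<le> a}" for S
    using that by (simp add: Sup_least subset_eq)
  ultimately show ?thesis unfolding BL_def D_ideal_def by blast
qed

lemma DM_BL: "DM \<subseteq> (BL :: 'a::complete_lattice set set)"
proof
  fix I :: "'a set" assume "I \<in> DM"
  then obtain a where "I = {x. x \<le> a}" using DM_char by blast
  thus "I \<in> BL" using down_BL by simp
qed

lemma BL_Inter: "G \<subseteq> BL \<Longrightarrow> \<Inter>G \<in> BL"
  unfolding BL_def D_ideal_def is_downset_def
proof (intro CollectI conjI allI impI)
  fix x y assume G: "G \<subseteq> {I. (\<forall>x y. y \<in> I \<longrightarrow> x \<le> y \<longrightarrow> x \<in> I) \<and>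
      (\<forall>S. S \<subseteq> I \<longrightarrow> distributive_join S \<longrightarrow> Sup S \<in> I)}"
    and "y \<in> \<Inter>G" "x \<le> y"
  thus "x \<in> \<Inter>G" by blast
next
  fix S assume G: "G \<subseteq> {I. (\<forall>x y. y \<in> I \<longrightarrow> x \<le> y \<longrightarrow> x \<in> I) \<and>
      (\<forall>S. S \<subseteq> I \<longrightarrow> distributive_join S \<longrightarrow> Sup S \<in> I)}"
    and "S \<subseteq> \<Inter>G" "distributive_join S"
  thus "Sup S \<in> \<Inter>G" by blast
qed

lemma BL_join_BL: "BL_join F \<in> BL"
  unfolding BL_join_def by (rule BL_Inter) auto

lemma BL_join_least: "J \<in> BL \<Longrightarrow> \<Union>F \<subseteq> J \<Longrightarrow> BL_join F \<subseteq> J"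
  by (auto simp: BL_join_def)

lemma BL_join_upper: "\<Union>F \<subseteq> BL_join F"
  by (auto simp: BL_join_def)


theorem proposition4p12:
  fixes r :: "'k rel"
  assumes "Cinfinite r" and "regularCard r"
  shows "kappa_proHeyting r TYPE('a::{complete_lattice, distrib_lattice})
     \<longleftrightarrow> kappa_frame r TYPE('a)"
proof
  assume H: "kappa_proHeyting r TYPE('a)"
  have cl: "BL_join F \<in> (DM :: 'a set set)" if "F \<subseteq> DM" "ordLess2 (card_of F) r" for F :: "'a set set"
  proof -
    have "BL_join F \<in> X" if "DM \<subseteq> X \<and> kappa_closed r X" for X
      using that \<open>F \<subseteq> DM\<close> \<open>ordLess2 (card_of F) r\<close> unfolding kappa_closed_def by blast
    hence "BL_join F \<in> BL_kappa_DM r" by (simp add: BL_kappa_DM_def)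
    thus ?thesis using H by (simp add: kappa_proHeyting_def)
  qed
  show "kappa_frame r TYPE('a)"
    unfolding kappa_frame_def distributive_join_def
  proof (intro allI impI)
    fix S :: "'a set" and a :: 'a
    assume S: "ordLess2 (card_of S) r"
    define F where "F = (\<lambda>s. {x. x \<le> s}) ` S"
    have "ordLess2 (card_of F) r" unfolding F_def using S card_of_image ordLeq_ordLess_trans by blast
    moreover have "F \<subseteq> DM" unfolding F_def using DM_char by blast
    ultimately have "BL_join F \<in> DM" using cl by blast
    then obtain c where c: "BL_join F = {x. x \<le> c}" using DM_char by blast
    have Sc: "Sup S \<le> c"
    proof (rule Sup_least)
      fix s assume "s \<in> S"
      hence "s \<in> \<Union>F" unfolding F_def by auto
      thus "s \<le> c" using BL_join_upper[of F] c by auto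
    qed
    define M where "M = Sup {inf a s | s. s \<in> S}"
    define J where "J = {x. inf x a \<le> M}"
    have "J \<in> BL"
      unfolding BL_def D_ideal_def is_downset_def distributive_join_def
    proof (safe)
      fix x y assume "y \<in> J" "x \<le> y"
      hence "inf y a \<le> M" "inf x a \<le> inf y a" unfolding J_def by (auto simp: le_infI1)
      thus "x \<in> J" unfolding J_def by (simp add: order.trans[of "inf x a" "inf y a" M])
    next
      fix T assume T: "T \<subseteq> J" "\<forall>b. inf b (Sup T) = Sup {inf b t | t. t \<in> T}"
      have "inf (Sup T) a = Sup {inf a t | t. t \<in> T}" using T(2) by (simp add: inf_commute)
      also have "\<dots> \<le> M"
        using T(1) unfolding J_def by (auto intro!: Sup_least simp: inf_commute)
      finally show "Sup T \<in> J" unfolding J_def by simp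
    qed
    moreover have "\<Union>F \<subseteq> J"
    proof
      fix x assume "x \<in> \<Union>F"
      then obtain s where s: "s \<in> S" "x \<le> s" unfolding F_def by auto
      have "inf x a \<le> inf a s" using s(2) by (simp add: le_infI1 le_infI2 inf_commute)
      also have "\<dots> \<le> M" unfolding M_def using s(1) by (blast intro: Sup_upper)
      finally show "x \<in> J" unfolding J_def by simp
    qed
    ultimately have "BL_join F \<subseteq> J" by (rule BL_join_least)
    hence "c \<in> J" using c by auto
    hence "inf c a \<le> M" unfolding J_def by simp
    moreover have "inf a (Sup S) \<le> inf c a" using Sc by (simp add: le_infI1 le_infI2)
    ultimately have "inf a (Sup S) \<le> M" by (rule order_trans[rotated])
    moreover have "M \<le> inf a (Sup S)" unfolding M_def
    proof (rule Sup_least)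
      fix y assume "y \<in> {inf a s | s. s \<in> S}"
      then obtain s where "s \<in> S" "y = inf a s" by auto
      thus "y \<le> inf a (Sup S)" by (simp add: le_infI1 le_infI2 Sup_upper)
    qed
    ultimately show "inf a (Sup S) = Sup {inf a s | s. s \<in> S}"
      unfolding M_def by (rule antisym)
  qed
next
  assume K: "kappa_frame r TYPE('a)"
  have "kappa_closed r (DM :: 'a set set)"
    unfolding kappa_closed_def
  proof (intro conjI allI impI ballI)
    show "DM \<subseteq> BL" by (rule DM_BL)
    show "UNIV \<in> (DM :: 'a set set)" using DM_char[of "UNIV::'a set"] by (metis (full_types) top_greatest Collect_cong UNIV_def)
  next
    fix I J :: "'a set" assume "I \<in> DM" "J \<in> DM"
    then obtain a b where "I = {x. x \<le> a}" "J = {x. x \<le> b}" using DM_char by metis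
    hence "I \<inter> J = {x. x \<le> inf a b}" by auto
    thus "I \<inter> J \<in> DM" using DM_char by blast
  next
    fix F :: "'a set set" assume F: "F \<subseteq> DM" "ordLess2 (card_of F) r"
    define S where "S = Sup ` F"
    have "ordLess2 (card_of S) r" unfolding S_def using F(2) card_of_image ordLeq_ordLess_trans by blast
    hence dj: "distributive_join S" using K by (simp add: kappa_frame_def)
    have FS: "\<forall>I\<in>F. I = {x. x \<le> Sup I}"
    proof
      fix I assume "I \<in> F"
      then obtain a where "I = {x. x \<le> a}" using F(1) DM_char by blast
      moreover hence "Sup I = a" by (metis Sup_atMost atMost_def)
      ultimately show "I = {x. x \<le> Sup I}" by simp
    qed
    have "BL_join F = {x. x \<le> Sup S}"
    proof
      show "BL_join F \<subseteq> {x. x \<le> Sup S}"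
      proof (rule BL_join_least[OF down_BL])
        show "\<Union>F \<subseteq> {x. x \<le> Sup S}"
        proof
          fix x assume "x \<in> \<Union>F"
          then obtain I where "I \<in> F" "x \<in> I" by auto
          hence "x \<le> Sup I" by (auto intro: Sup_upper)
          also have "Sup I \<le> Sup S" using \<open>I \<in> F\<close> unfolding S_def by (auto intro: Sup_upper)
          finally show "x \<in> {x. x \<le> Sup S}" by simp
        qed
      qed
    next
      have "BL_join F \<in> BL" by (rule BL_join_BL)
      moreover have "S \<subseteq> BL_join F"
      proof
        fix s assume "s \<in> S"
        then obtain I where "I \<in> F" "s = Sup I" unfolding S_def by auto
        hence "s \<in> I" using FS by blast
        thus "s \<in> BL_join F" using BL_join_upper[of F] \<open>I \<in> F\<close> by auto
      qed
      ultimately have "Sup S \<in> BL_join F" using dj by (auto simp: BL_def D_ideal_def)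
      thus "{x. x \<le> Sup S} \<subseteq> BL_join F"
        using \<open>BL_join F \<in> BL\<close> by (auto simp: BL_def D_ideal_def is_downset_def)
    qed
    thus "BL_join F \<in> DM" using DM_char by blast
  qed
  hence "BL_kappa_DM r \<subseteq> (DM :: 'a set set)" unfolding BL_kappa_DM_def by blast
  moreover have "(DM :: 'a set set) \<subseteq> BL_kappa_DM r" unfolding BL_kappa_DM_def by blast
  ultimately show "kappa_proHeyting r TYPE('a)" by (simp add: kappa_proHeyting_def)
qed

end
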